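(* Let $Q$ be a propositional proof system extending $CF$ that is not sound (i.e. $Q$ proves some proposition that is not a tautology). Then $Q$ proves every proposition by a proof of length linear in the length of the proposition.
   Context: Here a (possibly unsound) proof system extending $CF$ is the Circuit Frege system $CF$ (Frege rules on Boolean circuits plus a rule passing from a circuit to any circuit unfolding to the same formula) augmented with a polynomial-time decidable set of axiom schemas, any substitution instance of which may be used as an axiom. Propositions are Boolean circuits. *)

theory Defs
  imports Main
begin

datatype form = FVar nat | FTop | FBot | FNot form | FAnd form form | FOr form form | FImp form form

fun eval :: "(nat \<Rightarrow> bool) \<Rightarrow> form \<Rightarrow> bool" where
  "eval v (FVar i) = v i"
| "eval v FTop = True"
| "eval v FBot = False"
| "eval v (FNot a) = (\<not> eval v a)"
| "eval v (FAnd a b) = (eval v a \<and> eval v b)"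
| "eval v (FOr a b) = (eval v a \<or> eval v b)"
| "eval v (FImp a b) = (eval v a \<longrightarrow> eval v b)"

text \<open>A circuit is a list of gates together with an output gate; a gate at position k may
  only refer to gates at positions strictly below k.  Its size is the number of gates.\<close>

datatype gate = GVar nat | GTop | GBot | GNot nat | GAnd nat nat | GOr nat nat | GImp nat nat

type_synonym circuit = "gate list \<times> nat"

fun gate_refs :: "gate \<Rightarrow> nat set" where
  "gate_refs (GNot j) = {j}"
| "gate_refs (GAnd j l) = {j, l}"
| "gate_refs (GOr j l) = {j, l}"
| "gate_refs (GImp j l) = {j, l}"
| "gate_refs _ = {}"

definition wf_circuit :: "circuit \<Rightarrow> bool" where
  "wf_circuit C \<longleftrightarrow> snd C < length (fst C) \<and>
     (\<forall>k < length (fst C). \<forall>j \<in> gate_refs (fst C ! k). j < k)"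

definition csize :: "circuit \<Rightarrow> nat" where
  "csize C = length (fst C)"

text \<open>Unfolding of a circuit into a formula (ill-formed references unfold to FTop;
  this never happens for well-formed circuits).\<close>

function unf :: "gate list \<Rightarrow> nat \<Rightarrow> form" where
  "unf gs k = (case gs ! k of
      GVar i \<Rightarrow> FVar i
    | GTop \<Rightarrow> FTop
    | GBot \<Rightarrow> FBot
    | GNot j \<Rightarrow> (if j < k then FNot (unf gs j) else FTop)
    | GAnd j l \<Rightarrow> (if j < k \<and> l < k then FAnd (unf gs j) (unf gs l) else FTop)
    | GOr j l \<Rightarrow> (if j < k \<and> l < k then FOr (unf gs j) (unf gs l) else FTop)
    | GImp j l \<Rightarrow> (if j < k \<and> l < k then FImp (unf gs j) (unf gs l) else FTop))"
  by auto
termination by (relation "measure snd") auto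

definition unfold_circuit :: "circuit \<Rightarrow> form" where
  "unfold_circuit C = unf (fst C) (snd C)"

definition tautology :: "circuit \<Rightarrow> bool" where
  "tautology C \<longleftrightarrow> (\<forall>v. eval v (unfold_circuit C))"

fun shift_gate :: "nat \<Rightarrow> gate \<Rightarrow> gate" where
  "shift_gate n (GNot j) = GNot (j + n)"
| "shift_gate n (GAnd j l) = GAnd (j + n) (l + n)"
| "shift_gate n (GOr j l) = GOr (j + n) (l + n)"
| "shift_gate n (GImp j l) = GImp (j + n) (l + n)"
| "shift_gate n g = g"

fun remap_gate :: "nat list \<Rightarrow> gate \<Rightarrow> gate" where
  "remap_gate m (GNot j) = GNot (m ! j)"
| "remap_gate m (GAnd j l) = GAnd (m ! j) (m ! l)"
| "remap_gate m (GOr j l) = GOr (m ! j) (m ! l)"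
| "remap_gate m (GImp j l) = GImp (m ! j) (m ! l)"
| "remap_gate m g = g"

fun cat_circuits :: "circuit list \<Rightarrow> gate list \<Rightarrow> nat list \<Rightarrow> gate list \<times> nat list" where
  "cat_circuits [] gs os = (gs, os)"
| "cat_circuits ((h, out) # Ds) gs os =
     cat_circuits Ds (gs @ map (shift_gate (length gs)) h) (os @ [length gs + out])"

text \<open>Place the gates of the schema on top; variable gate i (for i below the number
  of substituted circuits) is replaced by the output of the i-th substituted circuit.\<close>
fun place :: "nat list \<Rightarrow> gate list \<Rightarrow> nat list \<Rightarrow> gate list \<Rightarrow> gate list \<times> nat list" where
  "place os [] m acc = (acc, m)"
| "place os (g # gs) m acc =
     (case g of
        GVar i \<Rightarrow> (if i < length os then place os gs (m @ [os ! i]) acc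
                   else place os gs (m @ [length acc]) (acc @ [GVar i]))
      | _ \<Rightarrow> place os gs (m @ [length acc]) (acc @ [remap_gate m g]))"

definition inst :: "circuit \<Rightarrow> circuit list \<Rightarrow> circuit" where
  "inst S Ds = (let (gs, os) = cat_circuits Ds [] [];
                    (gs', m) = place os (fst S) [] gs
                in (gs', m ! snd S))"

fun comp :: "form \<Rightarrow> gate list \<Rightarrow> gate list \<times> nat" where
  "comp (FVar i) acc = (acc @ [GVar i], length acc)"
| "comp FTop acc = (acc @ [GTop], length acc)"
| "comp FBot acc = (acc @ [GBot], length acc)"
| "comp (FNot a) acc = (let (a1, o1) = comp a acc in (a1 @ [GNot o1], length a1))"
| "comp (FAnd a b) acc = (let (a1, o1) = comp a acc; (a2, o2) = comp b a1
                          in (a2 @ [GAnd o1 o2], length a2))"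
| "comp (FOr a b) acc = (let (a1, o1) = comp a acc; (a2, o2) = comp b a1
                         in (a2 @ [GOr o1 o2], length a2))"
| "comp (FImp a b) acc = (let (a1, o1) = comp a acc; (a2, o2) = comp b a1
                          in (a2 @ [GImp o1 o2], length a2))"

definition circ_of :: "form \<Rightarrow> circuit" where
  "circ_of \<phi> = comp \<phi> []"

abbreviation "pA \<equiv> FVar 0"
abbreviation "pB \<equiv> FVar 1"
abbreviation "pC \<equiv> FVar 2"

definition frege_rules :: "(form list \<times> form) list" where
  "frege_rules =
   [ ([], FImp pA (FImp pB pA)),
     ([], FImp (FImp pA pB) (FImp (FImp pA (FImp pB pC)) (FImp pA pC))),
     ([], FImp pA (FImp pB (FAnd pA pB))),
     ([], FImp (FAnd pA pB) pA),
     ([], FImp (FAnd pA pB) pB),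
     ([], FImp pA (FOr pA pB)),
     ([], FImp pB (FOr pA pB)),
     ([], FImp (FImp pA pC) (FImp (FImp pB pC) (FImp (FOr pA pB) pC))),
     ([], FImp (FImp pA pB) (FImp (FImp pA (FNot pB)) (FNot pA))),
     ([], FImp (FNot (FNot pA)) pA),
     ([], FTop),
     ([], FNot FBot),
     ([], FImp FBot pA),
     ([pA, FImp pA pB], pB) ]"

text \<open>A is the set of additional axiom schemas (circuits); any substitution instance may be
  used as an axiom.\<close>

definition cf_step :: "circuit set \<Rightarrow> circuit list \<Rightarrow> circuit \<Rightarrow> bool" where
  "cf_step A prev C \<longleftrightarrow>
     (\<exists>(ps, c) \<in> set frege_rules. \<exists>Ds. (\<forall>D \<in> set Ds. wf_circuit D) \<and>
         C = inst (circ_of c) Ds \<and> (\<forall>p \<in> set ps. inst (circ_of p) Ds \<in> set prev))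
   \<or> (\<exists>S \<in> A. wf_circuit S \<and> (\<exists>Ds. (\<forall>D \<in> set Ds. wf_circuit D) \<and> C = inst S Ds))
   \<or> (\<exists>C' \<in> set prev. unfold_circuit C' = unfold_circuit C)"

definition is_proof :: "circuit set \<Rightarrow> circuit list \<Rightarrow> circuit \<Rightarrow> bool" where
  "is_proof A \<pi> C \<longleftrightarrow> \<pi> \<noteq> [] \<and> last \<pi> = C \<and>
     (\<forall>k < length \<pi>. wf_circuit (\<pi> ! k) \<and> cf_step A (take k \<pi>) (\<pi> ! k))"

definition proof_length :: "circuit list \<Rightarrow> nat" where
  "proof_length \<pi> = sum_list (map csize \<pi>)"

definition provable :: "circuit set \<Rightarrow> circuit \<Rightarrow> bool" where
  "provable A C \<longleftrightarrow> (\<exists>\<pi>. is_proof A \<pi> C)"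

definition sound :: "circuit set \<Rightarrow> bool" where
  "sound A \<longleftrightarrow> (\<forall>C. provable A C \<longrightarrow> tautology C)"

end

theory Submission
  imports Defs
begin

declare unf.simps[simp del]

lemma unf_append: "k < length gs \<Longrightarrow> unf (gs @ xs) k = unf gs k"
proof (induction k rule: less_induct)
  case (less k)
  have e: "(gs @ xs) ! k = gs ! k" using less.prems by (simp add: nth_append)
  show ?case
    apply (subst unf.simps[of "gs @ xs"]) apply (subst unf.simps[of gs])
    unfolding e using less by (cases "gs ! k") auto
qed

lemma unf_shift: "k < length h \<Longrightarrow> unf (pre @ map (shift_gate (length pre)) h) (length pre + k) = unf h k"
proof (induction k rule: less_induct)
  case (less k)
  have e: "(pre @ map (shift_gate (length pre)) h) ! (length pre + k) = shift_gate (length pre) (h ! k)"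
    using less.prems by (simp add: nth_append)
  show ?case
    apply (subst unf.simps[of "pre @ map (shift_gate (length pre)) h"]) apply (subst unf.simps[of h])
    unfolding e using less by (cases "h ! k") (auto simp: add.commute)
qed

definition wf_gates :: "gate list \<Rightarrow> bool" where
  "wf_gates gs \<longleftrightarrow> (\<forall>k < length gs. \<forall>j \<in> gate_refs (gs ! k). j < k)"

lemma wf_circuit_iff: "wf_circuit C \<longleftrightarrow> snd C < length (fst C) \<and> wf_gates (fst C)"
  by (simp add: wf_circuit_def wf_gates_def)

fun fsubst :: "(nat \<Rightarrow> form) \<Rightarrow> form \<Rightarrow> form" where
  "fsubst s (FVar i) = s i"
| "fsubst s FTop = FTop"
| "fsubst s FBot = FBot"
| "fsubst s (FNot a) = FNot (fsubst s a)"
| "fsubst s (FAnd a b) = FAnd (fsubst s a) (fsubst s b)"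
| "fsubst s (FOr a b) = FOr (fsubst s a) (fsubst s b)"
| "fsubst s (FImp a b) = FImp (fsubst s a) (fsubst s b)"

lemma new_gate:
  assumes "G ! n = g" "\<forall>j\<in>gate_refs g. j < n"
    "\<forall>j<n. m ! j < length acc \<and> unf acc (m ! j) = fsubst \<tau> (unf G j)"
    "\<forall>i. g \<noteq> GVar i"
  shows "unf (acc @ [remap_gate m g]) (length acc) = fsubst \<tau> (unf G n)"
    and "\<forall>j\<in>gate_refs (remap_gate m g). j < length acc"
proof -
  show "unf (acc @ [remap_gate m g]) (length acc) = fsubst \<tau> (unf G n)"
    apply (subst unf.simps[of "acc @ [remap_gate m g]"]) apply (subst unf.simps[of G])
    using assms by (cases g) (auto simp: unf_append)
  show "\<forall>j\<in>gate_refs (remap_gate m g). j < length acc"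
    using assms by (cases g) auto
qed

lemma unf_var: "unf (acc @ [GVar i]) (length acc) = FVar i"
  by (subst unf.simps) simp

lemma G_var: "G ! n = GVar i \<Longrightarrow> unf G n = FVar i"
  by (subst unf.simps) simp


definition place_inv where
  "place_inv G \<tau> os n m acc \<longleftrightarrow> length m = n \<and> wf_gates acc \<and>
     (\<forall>j<n. m ! j < length acc \<and> unf acc (m ! j) = fsubst \<tau> (unf G j)) \<and>
     (\<forall>i<length os. os ! i < length acc \<and> unf acc (os ! i) = \<tau> i)"

lemma wf_gates_snoc: "wf_gates acc \<Longrightarrow> \<forall>j\<in>gate_refs g. j < length acc \<Longrightarrow> wf_gates (acc @ [g])"
  unfolding wf_gates_def by (auto simp: nth_append less_Suc_eq)

lemma place_inv_snoc:
  assumes "place_inv G \<tau> os n m acc" "\<forall>j\<in>gate_refs g. j < length acc"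
    "unf (acc @ [g]) (length acc) = fsubst \<tau> (unf G n)"
  shows "place_inv G \<tau> os (Suc n) (m @ [length acc]) (acc @ [g])"
  using assms unfolding place_inv_def
  by (auto simp: wf_gates_snoc nth_append unf_append less_Suc_eq)

lemma place_lemma:
  assumes wfG: "wf_gates G" and tau: "\<forall>i. length os \<le> i \<longrightarrow> \<tau> i = FVar i"
  shows "drop n G = rest \<Longrightarrow> n \<le> length G \<Longrightarrow> place_inv G \<tau> os n m acc \<Longrightarrow> place os rest m acc = (acc', m') \<Longrightarrow>
     place_inv G \<tau> os (length G) m' acc' \<and> length acc' \<le> length acc + length rest"
proof (induction rest arbitrary: n m acc)
  case Nil
  then show ?case by (simp add: place_inv_def)
next
  case (Cons g rest)
  have nG: "n < length G" "G ! n = g" "drop (Suc n) G = rest"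
    using Cons.prems(1) by (metis drop_all list.distinct(1) not_le_imp_less,
       metis Cons_nth_drop_Suc drop_all list.distinct(1) list.inject not_le_imp_less,
       metis Cons_nth_drop_Suc drop_all list.distinct(1) list.inject not_le_imp_less)
  have refs: "\<forall>j\<in>gate_refs g. j < n" using wfG nG unfolding wf_gates_def by auto
  note inv = Cons.prems(3)
  show ?case
  proof (cases "\<exists>i. g = GVar i")
    case True
    then obtain i where gi: "g = GVar i" by auto
    show ?thesis
    proof (cases "i < length os")
      case True
      have "place_inv G \<tau> os (Suc n) (m @ [os ! i]) acc"
        using inv True nG gi unfolding place_inv_def
        by (auto simp: nth_append less_Suc_eq G_var)
      moreover have "place os rest (m @ [os ! i]) acc = (acc', m')"
        using Cons.prems(4) gi True by simp
      ultimately show ?thesis using Cons.IH[OF nG(3)] nG(1) by fastforce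
    next
      case False
      have "place_inv G \<tau> os (Suc n) (m @ [length acc]) (acc @ [GVar i])"
        using False nG gi tau by (intro place_inv_snoc[OF inv]) (auto simp: unf_var G_var)
      moreover have "place os rest (m @ [length acc]) (acc @ [GVar i]) = (acc', m')"
        using Cons.prems(4) gi False by simp
      ultimately show ?thesis using Cons.IH[OF nG(3)] nG(1) by fastforce
    qed
  next
    case False
    have pl: "place os rest (m @ [length acc]) (acc @ [remap_gate m g]) = (acc', m')"
      using Cons.prems(4) False by (cases g) auto
    have mi: "\<forall>j<n. m ! j < length acc \<and> unf acc (m ! j) = fsubst \<tau> (unf G j)"
      using inv unfolding place_inv_def by auto
    have "place_inv G \<tau> os (Suc n) (m @ [length acc]) (acc @ [remap_gate m g])"
      using new_gate[OF nG(2) refs mi] False by (intro place_inv_snoc[OF inv]) auto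
    then show ?thesis using Cons.IH[OF nG(3) _ _ pl] nG(1) by fastforce
  qed
qed


lemma wf_gates_shift: "wf_gates gs \<Longrightarrow> wf_gates h \<Longrightarrow> wf_gates (gs @ map (shift_gate (length gs)) h)"
  unfolding wf_gates_def
proof (intro allI impI ballI)
  fix k j
  assume a: "\<forall>k<length gs. \<forall>j\<in>gate_refs (gs ! k). j < k" "\<forall>k<length h. \<forall>j\<in>gate_refs (h ! k). j < k"
    "k < length (gs @ map (shift_gate (length gs)) h)" "j \<in> gate_refs ((gs @ map (shift_gate (length gs)) h) ! k)"
  show "j < k"
  proof (cases "k < length gs")
    case True then show ?thesis using a by (auto simp: nth_append)
  next
    case False
    then obtain k' where k: "k = length gs + k'" "k' < length h" using a(3) by (metis add_diff_inverse_nat length_append length_map nat_add_left_cancel_less)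
    then have "j \<in> gate_refs (shift_gate (length gs) (h ! k'))" using a(4) by (simp add: nth_append)
    then show ?thesis using a(2) k by (cases "h ! k'") auto
  qed
qed

lemma csize_pair: "csize (h, out) = length h" by (simp add: csize_def)

lemma cat_lemma:
  "cat_circuits Ds gs os = (gs', os') \<Longrightarrow> wf_gates gs \<Longrightarrow> (\<forall>D\<in>set Ds. wf_circuit D) \<Longrightarrow>
   (\<exists>ext. gs' = gs @ ext) \<and> wf_gates gs' \<and> length gs' = length gs + sum_list (map csize Ds) \<and>
   length os' = length os + length Ds \<and> (\<forall>i<length os. os' ! i = os ! i) \<and>
   (\<forall>i<length Ds. os' ! (length os + i) < length gs' \<and> unf gs' (os' ! (length os + i)) = unfold_circuit (Ds ! i))"
proof (induction Ds arbitrary: gs os)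
  case Nil
  then show ?case by simp
next
  case (Cons D Ds)
  obtain h out where D: "D = (h, out)" by fastforce
  define gs1 where "gs1 = gs @ map (shift_gate (length gs)) h"
  define os1 where "os1 = os @ [length gs + out]"
  have wfD: "out < length h" "wf_gates h" using Cons.prems(3) D by (auto simp: wf_circuit_iff)
  have c: "cat_circuits Ds gs1 os1 = (gs', os')" using Cons.prems(1) D by (simp add: gs1_def os1_def)
  have w1: "wf_gates gs1" using wf_gates_shift[OF Cons.prems(2) wfD(2)] by (simp add: gs1_def)
  have wfDs: "\<forall>D\<in>set Ds. wf_circuit D" using Cons.prems(3) by simp
  note IH = Cons.IH[OF c w1 wfDs]
  then obtain ext where ext: "gs' = gs1 @ ext" by auto
  have u: "unf gs' (length gs + out) = unfold_circuit D"
  proof -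
    have "unf (gs1 @ ext) (length gs + out) = unf gs1 (length gs + out)"
      by (rule unf_append) (simp add: gs1_def wfD)
    then show ?thesis using ext wfD unf_shift[of out h gs] unfolding gs1_def D unfold_circuit_def
      by simp
  qed
  have l: "length gs' = length gs + sum_list (map csize (D # Ds))"
    using IH by (simp add: gs1_def D csize_pair)
  have o1: "\<forall>i<length os1. os' ! i = os1 ! i" using IH by auto
  have o2: "os' ! length os = length gs + out" using o1 by (simp add: os1_def)
  have "\<forall>i<length (D # Ds). os' ! (length os + i) < length gs' \<and> unf gs' (os' ! (length os + i)) = unfold_circuit ((D # Ds) ! i)"
  proof (intro allI impI)
    fix i assume i: "i < length (D # Ds)"
    show "os' ! (length os + i) < length gs' \<and> unf gs' (os' ! (length os + i)) = unfold_circuit ((D # Ds) ! i)"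
    proof (cases i)
      case 0 then show ?thesis using o2 u l wfD by (simp add: D csize_def)
    next
      case (Suc i')
      have A: "\<forall>i<length Ds. os' ! (length os1 + i) < length gs' \<and> unf gs' (os' ! (length os1 + i)) = unfold_circuit (Ds ! i)"
        using IH by blast
      have "length os + i = length os1 + i'" using Suc by (simp add: os1_def)
      then show ?thesis using A[rule_format, of i'] i Suc by (simp add: os1_def)
    qed
  qed
  then show ?case using IH l o1 ext by (auto simp: gs1_def os1_def nth_append)
qed


definition sub_of :: "circuit list \<Rightarrow> nat \<Rightarrow> form" where
  "sub_of Ds i = (if i < length Ds then unfold_circuit (Ds ! i) else FVar i)"

lemma inst_lemma:
  assumes S: "wf_circuit S" and Ds: "\<forall>D\<in>set Ds. wf_circuit D"
  shows "wf_circuit (inst S Ds) \<and> unfold_circuit (inst S Ds) = fsubst (sub_of Ds) (unfold_circuit S)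
    \<and> csize (inst S Ds) \<le> csize S + sum_list (map csize Ds)"
proof -
  obtain gs os where c: "cat_circuits Ds [] [] = (gs, os)" by fastforce
  have wf0: "wf_gates []" by (simp add: wf_gates_def)
  note C = cat_lemma[OF c wf0 Ds]
  obtain G out where SG: "S = (G, out)" by fastforce
  have wfG: "wf_gates G" "out < length G" using S SG by (auto simp: wf_circuit_iff)
  have tau: "\<forall>i. length os \<le> i \<longrightarrow> sub_of Ds i = FVar i" using C by (simp add: sub_of_def)
  have inv0: "place_inv G (sub_of Ds) os 0 [] gs"
    using C by (auto simp: place_inv_def sub_of_def)
  obtain gs' m where p: "place os G [] gs = (gs', m)" by fastforce
  note P = place_lemma[OF wfG(1) tau _ _ inv0 p, simplified]
  have i: "inst S Ds = (gs', m ! out)" using c p SG by (simp add: inst_def)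
  show ?thesis
    using P wfG C unfolding i place_inv_def
    by (auto simp: wf_circuit_iff unfold_circuit_def csize_def SG)
qed


lemma unf_snoc:
  "unf (gs @ [GTop]) (length gs) = FTop"
  "unf (gs @ [GBot]) (length gs) = FBot"
  "j < length gs \<Longrightarrow> unf (gs @ [GNot j]) (length gs) = FNot (unf gs j)"
  "j < length gs \<Longrightarrow> l < length gs \<Longrightarrow> unf (gs @ [GAnd j l]) (length gs) = FAnd (unf gs j) (unf gs l)"
  "j < length gs \<Longrightarrow> l < length gs \<Longrightarrow> unf (gs @ [GOr j l]) (length gs) = FOr (unf gs j) (unf gs l)"
  "j < length gs \<Longrightarrow> l < length gs \<Longrightarrow> unf (gs @ [GImp j l]) (length gs) = FImp (unf gs j) (unf gs l)"
  by (subst unf.simps; simp add: unf_append)+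

lemma comp_lemma:
  "comp \<phi> acc = (acc', ot) \<Longrightarrow> wf_gates acc \<Longrightarrow>
   (\<exists>ext. acc' = acc @ ext) \<and> wf_gates acc' \<and> ot < length acc' \<and> unf acc' ot = \<phi>"
proof (induction \<phi> arbitrary: acc acc' ot)
  case (FVar i) then show ?case by (auto simp: wf_gates_snoc unf_var)
next
  case FTop then show ?case by (auto simp: wf_gates_snoc unf_snoc)
next
  case FBot then show ?case by (auto simp: wf_gates_snoc unf_snoc)
next
  case (FNot a)
  obtain a1 o1 where c1: "comp a acc = (a1, o1)" by fastforce
  note I = FNot.IH[OF c1 FNot.prems(2)]
  obtain e where e: "a1 = acc @ e" using I by auto
  have J: "wf_gates a1" "o1 < length a1" "unf a1 o1 = a" using I by auto
  have r: "acc' = a1 @ [GNot o1]" "ot = length a1" using FNot.prems(1) c1 by auto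
  have E: "\<exists>ext. acc' = acc @ ext" using r e by simp
  have W: "wf_gates acc' \<and> ot < length acc' \<and> unf acc' ot = FNot a" unfolding r using J by (simp add: wf_gates_snoc unf_snoc)
  show ?case using E W by blast
next
  case (FAnd a b)
  obtain a1 o1 where c1: "comp a acc = (a1, o1)" by fastforce
  note I1 = FAnd.IH(1)[OF c1 FAnd.prems(2)]
  obtain e where e: "a1 = acc @ e" using I1 by auto
  have J1: "wf_gates a1" "o1 < length a1" "unf a1 o1 = a" using I1 by auto
  obtain a2 o2 where c2: "comp b a1 = (a2, o2)" by fastforce
  note I2 = FAnd.IH(2)[OF c2 J1(1)]
  obtain e2 where e2: "a2 = a1 @ e2" using I2 by auto
  have J2: "wf_gates a2" "o2 < length a2" "unf a2 o2 = b" using I2 by auto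
  have "unf a2 o1 = a" using J1 e2 by (simp add: unf_append)
  moreover have "o1 < length a2" using J1 e2 by simp
  moreover have r: "acc' = a2 @ [GAnd o1 o2]" "ot = length a2" using FAnd.prems(1) c1 c2 by auto
  ultimately have W: "wf_gates acc' \<and> ot < length acc' \<and> unf acc' ot = FAnd a b" using J2 by (simp add: wf_gates_snoc unf_snoc)
  have E: "\<exists>ext. acc' = acc @ ext" using r e e2 by simp
  show ?case using E W by blast
next
  case (FOr a b)
  obtain a1 o1 where c1: "comp a acc = (a1, o1)" by fastforce
  note I1 = FOr.IH(1)[OF c1 FOr.prems(2)]
  obtain e where e: "a1 = acc @ e" using I1 by auto
  have J1: "wf_gates a1" "o1 < length a1" "unf a1 o1 = a" using I1 by auto
  obtain a2 o2 where c2: "comp b a1 = (a2, o2)" by fastforce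
  note I2 = FOr.IH(2)[OF c2 J1(1)]
  obtain e2 where e2: "a2 = a1 @ e2" using I2 by auto
  have J2: "wf_gates a2" "o2 < length a2" "unf a2 o2 = b" using I2 by auto
  have "unf a2 o1 = a" using J1 e2 by (simp add: unf_append)
  moreover have "o1 < length a2" using J1 e2 by simp
  moreover have r: "acc' = a2 @ [GOr o1 o2]" "ot = length a2" using FOr.prems(1) c1 c2 by auto
  ultimately have W: "wf_gates acc' \<and> ot < length acc' \<and> unf acc' ot = FOr a b" using J2 by (simp add: wf_gates_snoc unf_snoc)
  have E: "\<exists>ext. acc' = acc @ ext" using r e e2 by simp
  show ?case using E W by blast
next
  case (FImp a b)
  obtain a1 o1 where c1: "comp a acc = (a1, o1)" by fastforce
  note I1 = FImp.IH(1)[OF c1 FImp.prems(2)]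
  obtain e where e: "a1 = acc @ e" using I1 by auto
  have J1: "wf_gates a1" "o1 < length a1" "unf a1 o1 = a" using I1 by auto
  obtain a2 o2 where c2: "comp b a1 = (a2, o2)" by fastforce
  note I2 = FImp.IH(2)[OF c2 J1(1)]
  obtain e2 where e2: "a2 = a1 @ e2" using I2 by auto
  have J2: "wf_gates a2" "o2 < length a2" "unf a2 o2 = b" using I2 by auto
  have "unf a2 o1 = a" using J1 e2 by (simp add: unf_append)
  moreover have "o1 < length a2" using J1 e2 by simp
  moreover have r: "acc' = a2 @ [GImp o1 o2]" "ot = length a2" using FImp.prems(1) c1 c2 by auto
  ultimately have W: "wf_gates acc' \<and> ot < length acc' \<and> unf acc' ot = FImp a b" using J2 by (simp add: wf_gates_snoc unf_snoc)
  have E: "\<exists>ext. acc' = acc @ ext" using r e e2 by simp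
  show ?case using E W by blast
qed

lemma circ_of_lemma: "wf_circuit (circ_of \<phi>) \<and> unfold_circuit (circ_of \<phi>) = \<phi>"
proof -
  obtain acc' ot where c: "comp \<phi> [] = (acc', ot)" by fastforce
  have "wf_gates []" by (simp add: wf_gates_def)
  from comp_lemma[OF c this] show ?thesis using c
    by (auto simp: circ_of_def wf_circuit_iff unfold_circuit_def)
qed



lemma eval_fsubst: "eval v (fsubst s \<phi>) = eval (\<lambda>i. eval v (s i)) \<phi>"
  by (induction \<phi>) auto

lemma frege_sound: "(ps, c) \<in> set frege_rules \<Longrightarrow> \<forall>p\<in>set ps. eval w p \<Longrightarrow> eval w c"
  unfolding frege_rules_def by auto

definition valid :: "circuit set \<Rightarrow> circuit list \<Rightarrow> bool" where
  "valid A \<pi> \<longleftrightarrow> (\<forall>k<length \<pi>. wf_circuit (\<pi> ! k) \<and> cf_step A (take k \<pi>) (\<pi> ! k))"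

lemma is_proof_valid: "is_proof A \<pi> C \<longleftrightarrow> \<pi> \<noteq> [] \<and> last \<pi> = C \<and> valid A \<pi>"
  by (simp add: is_proof_def valid_def)

lemma unf_inst: "wf_circuit S \<Longrightarrow> \<forall>D\<in>set Ds. wf_circuit D \<Longrightarrow>
   unfold_circuit (inst S Ds) = fsubst (sub_of Ds) (unfold_circuit S)"
  using inst_lemma by blast

lemma sound_valid:
  assumes AS: "\<forall>S\<in>A. wf_circuit S \<longrightarrow> tautology S" and V: "valid A \<pi>"
  shows "k < length \<pi> \<Longrightarrow> tautology (\<pi> ! k)"
proof (induction k rule: less_induct)
  case (less k)
  have prevT: "\<And>X. X \<in> set (take k \<pi>) \<Longrightarrow> tautology X"
  proof -
    fix X assume "X \<in> set (take k \<pi>)"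
    then obtain j where "j < length (take k \<pi>)" "X = take k \<pi> ! j" by (metis in_set_conv_nth)
    then show "tautology X" using less by auto
  qed
  have st: "cf_step A (take k \<pi>) (\<pi> ! k)" using V less.prems by (simp add: valid_def)
  show ?case
  using st unfolding cf_step_def
  proof (elim disjE)
    assume "\<exists>(ps, c)\<in>set frege_rules. \<exists>Ds. (\<forall>D\<in>set Ds. wf_circuit D) \<and>
         \<pi> ! k = inst (circ_of c) Ds \<and> (\<forall>p\<in>set ps. inst (circ_of p) Ds \<in> set (take k \<pi>))"
    then obtain ps c Ds where r: "(ps, c) \<in> set frege_rules" "\<forall>D\<in>set Ds. wf_circuit D"
      "\<pi> ! k = inst (circ_of c) Ds" "\<forall>p\<in>set ps. inst (circ_of p) Ds \<in> set (take k \<pi>)" by auto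
    have "\<forall>p\<in>set ps. tautology (inst (circ_of p) Ds)" using r(4) prevT by auto
    then have "\<forall>p\<in>set ps. \<forall>v. eval v (fsubst (sub_of Ds) p)"
      using unf_inst[OF conjunct1[OF circ_of_lemma] r(2)] circ_of_lemma by (simp add: tautology_def)
    then show ?thesis
      using unf_inst[OF conjunct1[OF circ_of_lemma] r(2)] circ_of_lemma r(1,3) frege_sound
      by (simp add: tautology_def eval_fsubst)
  next
    assume "\<exists>S\<in>A. wf_circuit S \<and> (\<exists>Ds. (\<forall>D\<in>set Ds. wf_circuit D) \<and> \<pi> ! k = inst S Ds)"
    then obtain S Ds where "S \<in> A" "wf_circuit S" "\<forall>D\<in>set Ds. wf_circuit D" "\<pi> ! k = inst S Ds" by auto
    then show ?thesis using AS unf_inst by (simp add: tautology_def eval_fsubst)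
  next
    assume "\<exists>C'\<in>set (take k \<pi>). unfold_circuit C' = unfold_circuit (\<pi> ! k)"
    then obtain C' where "C' \<in> set (take k \<pi>)" "unfold_circuit C' = unfold_circuit (\<pi> ! k)" by blast
    then show ?thesis using prevT unfolding tautology_def by metis
  qed
qed

lemma bad_axiom:
  assumes "\<not> sound A"
  shows "\<exists>S\<in>A. wf_circuit S \<and> \<not> tautology S"
proof (rule ccontr)
  assume AS: "\<not> (\<exists>S\<in>A. wf_circuit S \<and> \<not> tautology S)"
  from assms obtain \<pi> C where p: "is_proof A \<pi> C" "\<not> tautology C"
    by (auto simp: sound_def provable_def)
  then have "\<pi> \<noteq> []" "C = \<pi> ! (length \<pi> - 1)" "valid A \<pi>" by (auto simp: is_proof_valid last_conv_nth)
  then have "tautology C" using sound_valid[of A \<pi> "length \<pi> - 1"] AS by auto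
  then show False using p by simp
qed


inductive der :: "form set \<Rightarrow> form \<Rightarrow> bool" for \<Gamma> where
  hyp: "\<phi> \<in> \<Gamma> \<Longrightarrow> der \<Gamma> \<phi>"
| ax: "([], c) \<in> set frege_rules \<Longrightarrow> der \<Gamma> (fsubst \<sigma> c)"
| mp: "der \<Gamma> a \<Longrightarrow> der \<Gamma> (FImp a b) \<Longrightarrow> der \<Gamma> b"

definition s3 :: "form \<Rightarrow> form \<Rightarrow> form \<Rightarrow> nat \<Rightarrow> form" where
  "s3 a b c = (\<lambda>i. if i = 0 then a else if i = 1 then b else c)"

lemma axI: "([], c) \<in> set frege_rules \<Longrightarrow> fsubst \<sigma> c = \<phi> \<Longrightarrow> der \<Gamma> \<phi>"
  using ax by blast

lemma A1: "der \<Gamma> (FImp a (FImp b a))"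
  by (rule axI[where c="FImp pA (FImp pB pA)" and \<sigma>="s3 a b a"]) (simp_all add: frege_rules_def s3_def)
lemma A2: "der \<Gamma> (FImp (FImp a b) (FImp (FImp a (FImp b c)) (FImp a c)))"
  by (rule axI[where c="FImp (FImp pA pB) (FImp (FImp pA (FImp pB pC)) (FImp pA pC))" and \<sigma>="s3 a b c"]) (simp_all add: frege_rules_def s3_def)
lemma A3: "der \<Gamma> (FImp a (FImp b (FAnd a b)))"
  by (rule axI[where c="FImp pA (FImp pB (FAnd pA pB))" and \<sigma>="s3 a b a"]) (simp_all add: frege_rules_def s3_def)
lemma A4: "der \<Gamma> (FImp (FAnd a b) a)"
  by (rule axI[where c="FImp (FAnd pA pB) pA" and \<sigma>="s3 a b a"]) (simp_all add: frege_rules_def s3_def)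
lemma A5: "der \<Gamma> (FImp (FAnd a b) b)"
  by (rule axI[where c="FImp (FAnd pA pB) pB" and \<sigma>="s3 a b a"]) (simp_all add: frege_rules_def s3_def)
lemma A6: "der \<Gamma> (FImp a (FOr a b))"
  by (rule axI[where c="FImp pA (FOr pA pB)" and \<sigma>="s3 a b a"]) (simp_all add: frege_rules_def s3_def)
lemma A7: "der \<Gamma> (FImp b (FOr a b))"
  by (rule axI[where c="FImp pB (FOr pA pB)" and \<sigma>="s3 a b a"]) (simp_all add: frege_rules_def s3_def)
lemma A8: "der \<Gamma> (FImp (FImp a c) (FImp (FImp b c) (FImp (FOr a b) c)))"
  by (rule axI[where c="FImp (FImp pA pC) (FImp (FImp pB pC) (FImp (FOr pA pB) pC))" and \<sigma>="s3 a b c"]) (simp_all add: frege_rules_def s3_def)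
lemma A9: "der \<Gamma> (FImp (FImp a b) (FImp (FImp a (FNot b)) (FNot a)))"
  by (rule axI[where c="FImp (FImp pA pB) (FImp (FImp pA (FNot pB)) (FNot pA))" and \<sigma>="s3 a b a"]) (simp_all add: frege_rules_def s3_def)
lemma A10: "der \<Gamma> (FImp (FNot (FNot a)) a)"
  by (rule axI[where c="FImp (FNot (FNot pA)) pA" and \<sigma>="s3 a a a"]) (simp_all add: frege_rules_def s3_def)
lemma A11: "der \<Gamma> FTop"
  by (rule axI[where c="FTop" and \<sigma>="s3 FTop FTop FTop"]) (simp_all add: frege_rules_def s3_def)
lemma A12: "der \<Gamma> (FNot FBot)"
  by (rule axI[where c="FNot FBot" and \<sigma>="s3 FTop FTop FTop"]) (simp_all add: frege_rules_def s3_def)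

lemma mp2: "der \<Gamma> (FImp a (FImp b c)) \<Longrightarrow> der \<Gamma> a \<Longrightarrow> der \<Gamma> b \<Longrightarrow> der \<Gamma> c"
  using mp by blast

lemma I: "der \<Gamma> (FImp a a)"
  using mp2[OF A2 A1 A1] .

lemma weaken: "der \<Gamma> \<phi> \<Longrightarrow> \<Gamma> \<subseteq> \<Delta> \<Longrightarrow> der \<Delta> \<phi>"
  by (induction rule: der.induct) (auto intro: der.intros)

lemma deduction: "der (insert h \<Gamma>) \<phi> \<Longrightarrow> der \<Gamma> (FImp h \<phi>)"
proof (induction rule: der.induct)
  case (hyp \<phi>)
  then show ?case using I A1 mp by (metis der.hyp insertE)
next
  case (ax c \<sigma>)
  then show ?case using mp[OF der.ax[OF ax(1)] A1] by blast
next
  case (mp a b)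
  then show ?case using mp2[OF A2] by blast
qed

lemma insert_hyp: "der (insert h \<Gamma>) h" by (rule hyp) simp
lemma wk: "der \<Gamma> \<phi> \<Longrightarrow> der (insert h \<Gamma>) \<phi>" by (erule weaken) auto

lemma notnot: "der \<Gamma> a \<Longrightarrow> der \<Gamma> (FNot (FNot a))"
  using mp2[OF A9[of \<Gamma> "FNot a" a] mp[OF _ A1] I] by blast

lemma neg_intro: "der \<Gamma> (FImp x y) \<Longrightarrow> der \<Gamma> (FImp x (FNot y)) \<Longrightarrow> der \<Gamma> (FNot x)"
  using mp2[OF A9] by blast

lemma explosion: "der \<Gamma> a \<Longrightarrow> der \<Gamma> (FNot a) \<Longrightarrow> der \<Gamma> b"
proof -
  assume a: "der \<Gamma> a" and na: "der \<Gamma> (FNot a)"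
  have "der \<Gamma> (FNot (FNot b))" using neg_intro[OF mp[OF a A1] mp[OF na A1]] .
  then show ?thesis using mp[OF _ A10] by blast
qed

fun fvars :: "form \<Rightarrow> nat set" where
  "fvars (FVar i) = {i}"
| "fvars FTop = {}"
| "fvars FBot = {}"
| "fvars (FNot a) = fvars a"
| "fvars (FAnd a b) = fvars a \<union> fvars b"
| "fvars (FOr a b) = fvars a \<union> fvars b"
| "fvars (FImp a b) = fvars a \<union> fvars b"

lemma kalmar: "fvars G = {} \<Longrightarrow> der \<Gamma> (if eval v G then G else FNot G)"
proof (induction G arbitrary: \<Gamma>)
  case (FVar x) then show ?case by simp
next
  case FTop then show ?case by (simp add: A11)
next
  case FBot then show ?case by (simp add: A12)
next
  case (FNot a)
  then show ?case using notnot[of \<Gamma> a] by (cases "eval v a") auto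
next
  case (FAnd a b)
  have ia: "der \<Gamma> (if eval v a then a else FNot a)" and ib: "der \<Gamma> (if eval v b then b else FNot b)"
    using FAnd by auto
  show ?case
  proof (cases "eval v a")
    case ta: True
    show ?thesis
    proof (cases "eval v b")
      case True then show ?thesis using ta ia ib mp2[OF A3] by auto
    next
      case False
      then have "der \<Gamma> (FNot (FAnd a b))" using ib neg_intro[OF A5 mp[OF _ A1]] by auto
      then show ?thesis using False by simp
    qed
  next
    case False
    then have "der \<Gamma> (FNot (FAnd a b))" using ia neg_intro[OF A4 mp[OF _ A1]] by auto
    then show ?thesis using False by simp
  qed
next
  case (FOr a b)
  have ia: "der \<Gamma> (if eval v a then a else FNot a)" and ib: "der \<Gamma> (if eval v b then b else FNot b)"
    using FOr by auto
  show ?case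
  proof (cases "eval v a")
    case True then show ?thesis using ia mp[OF _ A6] by auto
  next
    case fa: False
    show ?thesis
    proof (cases "eval v b")
      case True then show ?thesis using ib mp[OF _ A7] by auto
    next
      case False
      have na: "der \<Gamma> (FNot a)" and nb: "der \<Gamma> (FNot b)" using ia ib fa False by auto
      have "der (insert b \<Gamma>) a" using explosion[OF insert_hyp wk[OF nb]] .
      then have "der \<Gamma> (FImp b a)" by (rule deduction)
      then have "der \<Gamma> (FImp (FOr a b) a)" using mp2[OF A8 I] by blast
      then have "der \<Gamma> (FNot (FOr a b))" using neg_intro mp[OF na A1] by blast
      then show ?thesis using fa False by simp
    qed
  qed
next
  case (FImp a b)
  have ia: "der \<Gamma> (if eval v a then a else FNot a)" and ib: "der \<Gamma> (if eval v b then b else FNot b)"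
    using FImp by auto
  show ?case
  proof (cases "eval v a")
    case ta: True
    show ?thesis
    proof (cases "eval v b")
      case True then show ?thesis using ib mp[OF _ A1] by auto
    next
      case False
      have pa: "der \<Gamma> a" and nb: "der \<Gamma> (FNot b)" using ia ib ta False by auto
      have "der (insert (FImp a b) \<Gamma>) b" using mp[OF wk[OF pa] insert_hyp] .
      then have "der \<Gamma> (FImp (FImp a b) b)" by (rule deduction)
      then have "der \<Gamma> (FNot (FImp a b))" using neg_intro mp[OF nb A1] by blast
      then show ?thesis using ta False by simp
    qed
  next
    case False
    have na: "der \<Gamma> (FNot a)" using ia False by auto
    have "der (insert a \<Gamma>) b" using explosion[OF insert_hyp wk[OF na]] .
    then have "der \<Gamma> (FImp a b)" by (rule deduction)
    then show ?thesis using False by simp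
  qed
qed


lemma cf_mono: "cf_step A prev C \<Longrightarrow> set prev \<subseteq> set prev' \<Longrightarrow> cf_step A prev' C"
  unfolding cf_step_def by blast

lemma valid_append: "valid A \<pi>1 \<Longrightarrow> valid A \<pi>2 \<Longrightarrow> valid A (\<pi>1 @ \<pi>2)"
  unfolding valid_def
proof (intro allI impI)
  fix k assume v1: "\<forall>k<length \<pi>1. wf_circuit (\<pi>1 ! k) \<and> cf_step A (take k \<pi>1) (\<pi>1 ! k)"
    and v2: "\<forall>k<length \<pi>2. wf_circuit (\<pi>2 ! k) \<and> cf_step A (take k \<pi>2) (\<pi>2 ! k)"
    and k: "k < length (\<pi>1 @ \<pi>2)"
  show "wf_circuit ((\<pi>1 @ \<pi>2) ! k) \<and> cf_step A (take k (\<pi>1 @ \<pi>2)) ((\<pi>1 @ \<pi>2) ! k)"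
  proof (cases "k < length \<pi>1")
    case True then show ?thesis using v1 by (simp add: nth_append)
  next
    case False
    then have k2: "k - length \<pi>1 < length \<pi>2" using k by simp
    have "set (take (k - length \<pi>1) \<pi>2) \<subseteq> set (take k (\<pi>1 @ \<pi>2))" using False by auto
    have e: "(\<pi>1 @ \<pi>2) ! k = \<pi>2 ! (k - length \<pi>1)" using False by (simp add: nth_append)
    have c: "cf_step A (take k (\<pi>1 @ \<pi>2)) (\<pi>2 ! (k - length \<pi>1))"
      using cf_mono[OF conjunct2[OF v2[rule_format, OF k2]]] \<open>set (take (k - length \<pi>1) \<pi>2) \<subseteq> set (take k (\<pi>1 @ \<pi>2))\<close> .
    show ?thesis unfolding e using c v2 k2 by blast
  qed
qed

lemma valid_snoc: "valid A \<pi> \<Longrightarrow> wf_circuit X \<Longrightarrow> cf_step A \<pi> X \<Longrightarrow> valid A (\<pi> @ [X])"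
  unfolding valid_def by (auto simp: nth_append less_Suc_eq)

lemma valid_nil: "valid A []" by (simp add: valid_def)

definition PP :: "circuit set \<Rightarrow> form \<Rightarrow> bool" where
  "PP A \<phi> \<longleftrightarrow> (\<exists>\<pi>. valid A \<pi> \<and> (\<exists>X\<in>set \<pi>. unfold_circuit X = \<phi>))"

lemma fsubst_cong: "(\<forall>i\<in>fvars c. s i = s' i) \<Longrightarrow> fsubst s c = fsubst s' c"
  by (induction c) auto

lemma eval_cong: "(\<forall>i\<in>fvars c. v i = w i) \<Longrightarrow> eval v c = eval w c"
  by (induction c) auto

lemma fvars_fsubst: "fvars (fsubst s c) = (\<Union>i\<in>fvars c. fvars (s i))"
  by (induction c) auto

lemma fvars_bounded: "\<exists>N. \<forall>i\<in>fvars c. i < N"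
proof (induction c)
  case (FVar x) then show ?case by (intro exI[of _ "Suc x"]) auto
next
  case (FAnd a b) then obtain N M where "\<forall>i\<in>fvars a. i < N" "\<forall>i\<in>fvars b. i < M" by blast
  then show ?case by (intro exI[of _ "N + M"]) auto
next
  case (FOr a b) then obtain N M where "\<forall>i\<in>fvars a. i < N" "\<forall>i\<in>fvars b. i < M" by blast
  then show ?case by (intro exI[of _ "N + M"]) auto
next
  case (FImp a b) then obtain N M where "\<forall>i\<in>fvars a. i < N" "\<forall>i\<in>fvars b. i < M" by blast
  then show ?case by (intro exI[of _ "N + M"]) auto
qed auto

lemma wf_circ_of: "wf_circuit (circ_of \<phi>)" using circ_of_lemma by blast
lemma unf_circ_of[simp]: "unfold_circuit (circ_of \<phi>) = \<phi>" using circ_of_lemma by blast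

lemma frege_vars: "(ps, c) \<in> set frege_rules \<Longrightarrow> fvars c \<subseteq> {0, 1, 2}"
  unfolding frege_rules_def by auto

lemma translate: "der \<Gamma> \<phi> \<Longrightarrow> (\<forall>\<psi>\<in>\<Gamma>. PP A \<psi>) \<Longrightarrow> PP A \<phi>"
proof (induction rule: der.induct)
  case (hyp \<phi>) then show ?case by blast
next
  case (ax c \<sigma>)
  define Ds where "Ds = map (\<lambda>i. circ_of (\<sigma> i)) [0..<3]"
  have wDs: "\<forall>D\<in>set Ds. wf_circuit D" by (auto simp: Ds_def wf_circ_of)
  define X where "X = inst (circ_of c) Ds"
  have wX: "wf_circuit X" using inst_lemma[OF wf_circ_of wDs] by (simp add: X_def)
  have "unfold_circuit X = fsubst (sub_of Ds) c" using unf_inst[OF wf_circ_of wDs] by (simp add: X_def)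
  also have "\<dots> = fsubst \<sigma> c"
    using frege_vars[OF ax(1)] by (intro fsubst_cong) (auto simp: sub_of_def Ds_def)
  finally have uX: "unfold_circuit X = fsubst \<sigma> c" .
  have "cf_step A [] X" unfolding cf_step_def using ax(1) wDs by (auto simp: X_def)
  then have "valid A [X]" using valid_snoc[OF valid_nil wX] by simp
  then show ?case using uX unfolding PP_def by (intro exI[of _ "[X]"]) auto
next
  case (mp a b)
  from mp obtain \<pi>1 X1 where p1: "valid A \<pi>1" "X1 \<in> set \<pi>1" "unfold_circuit X1 = a" unfolding PP_def by blast
  from mp obtain \<pi>2 X2 where p2: "valid A \<pi>2" "X2 \<in> set \<pi>2" "unfold_circuit X2 = FImp a b" unfolding PP_def by blast
  define Ds where "Ds = [circ_of a, circ_of b]"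
  have wDs: "\<forall>D\<in>set Ds. wf_circuit D" by (auto simp: Ds_def wf_circ_of)
  define Y1 where "Y1 = inst (circ_of pA) Ds"
  define Y2 where "Y2 = inst (circ_of (FImp pA pB)) Ds"
  define Z where "Z = inst (circ_of pB) Ds"
  have w: "wf_circuit Y1" "wf_circuit Y2" "wf_circuit Z"
    using inst_lemma[OF wf_circ_of wDs] by (auto simp: Y1_def Y2_def Z_def)
  have u: "unfold_circuit Y1 = a" "unfold_circuit Y2 = FImp a b" "unfold_circuit Z = b"
    using unf_inst[OF wf_circ_of wDs] by (auto simp: Y1_def Y2_def Z_def sub_of_def Ds_def)
  have v0: "valid A (\<pi>1 @ \<pi>2)" using valid_append[OF p1(1) p2(1)] .
  have v1: "valid A (\<pi>1 @ \<pi>2 @ [Y1])"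
  proof -
    have "cf_step A (\<pi>1 @ \<pi>2) Y1" unfolding cf_step_def
      using p1(2,3) u(1) by (intro disjI2 disjI2 bexI[of _ X1]) auto
    then show ?thesis using valid_snoc[OF v0 w(1)] by simp
  qed
  have v2: "valid A (\<pi>1 @ \<pi>2 @ [Y1] @ [Y2])"
  proof -
    have "cf_step A (\<pi>1 @ \<pi>2 @ [Y1]) Y2" unfolding cf_step_def
      using p2(2,3) u(2) by (intro disjI2 disjI2 bexI[of _ X2]) auto
    then show ?thesis using valid_snoc[OF v1 w(2)] by simp
  qed
  have mpr: "([pA, FImp pA pB], pB) \<in> set frege_rules" by (simp add: frege_rules_def)
  have zz: "(\<forall>D\<in>set Ds. wf_circuit D) \<and> Z = inst (circ_of pB) Ds \<and>
     (\<forall>p\<in>set [pA, FImp pA pB]. inst (circ_of p) Ds \<in> set (\<pi>1 @ \<pi>2 @ [Y1] @ [Y2]))"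
    using wDs by (simp add: Y1_def Y2_def Z_def)
  have "cf_step A (\<pi>1 @ \<pi>2 @ [Y1] @ [Y2]) Z"
    unfolding cf_step_def apply (rule disjI1) apply (rule bexI[OF _ mpr]) apply (simp only: prod.case)
    using zz by blast
  then have v3: "valid A (\<pi>1 @ \<pi>2 @ [Y1] @ [Y2] @ [Z])"
    using valid_snoc[OF v2 w(3)] by simp
  then show ?case using u(3) unfolding PP_def by (intro exI[of _ "\<pi>1 @ \<pi>2 @ [Y1] @ [Y2] @ [Z]"]) auto
qed


lemma PP_bot:
  assumes "\<not> sound A"
  shows "PP A FBot"
proof -
  obtain S where S: "S \<in> A" "wf_circuit S" "\<not> tautology S" using bad_axiom[OF assms] by blast
  then obtain v where nv: "\<not> eval v (unfold_circuit S)" by (auto simp: tautology_def)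
  define \<phi> where "\<phi> = unfold_circuit S"
  obtain N where N: "\<forall>i\<in>fvars \<phi>. i < N" using fvars_bounded by blast
  define Ds where "Ds = map (\<lambda>i. circ_of (if v i then FTop else FBot)) [0..<N]"
  have wDs: "\<forall>D\<in>set Ds. wf_circuit D" by (auto simp: Ds_def wf_circ_of)
  define X where "X = inst S Ds"
  define F where "F = unfold_circuit X"
  have wX: "wf_circuit X" using inst_lemma[OF S(2) wDs] by (simp add: X_def)
  have FF: "F = fsubst (sub_of Ds) \<phi>" using unf_inst[OF S(2) wDs] by (simp add: F_def X_def \<phi>_def)
  have sub: "\<forall>i\<in>fvars \<phi>. sub_of Ds i = (if v i then FTop else FBot)"
    using N by (auto simp: sub_of_def Ds_def)
  have closed: "fvars F = {}" unfolding FF fvars_fsubst using sub by auto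
  have "eval v F = eval (\<lambda>i. eval v (sub_of Ds i)) \<phi>" unfolding FF eval_fsubst ..
  also have "\<dots> = eval v \<phi>" using sub by (intro eval_cong) auto
  finally have nF: "\<not> eval v F" using nv by (simp add: \<phi>_def)
  have "der {F} (FNot F)" using kalmar[OF closed, of "{F}" v] nF by simp
  moreover have "der {F} F" by (rule hyp) simp
  ultimately have d: "der {F} FBot" using explosion by blast
  have "cf_step A [] X" unfolding cf_step_def using S(1,2) wDs
    by (intro disjI2 disjI1 bexI[OF _ S(1)]) (auto simp: X_def)
  then have "valid A [X]" using valid_snoc[OF valid_nil wX] by simp
  then have "PP A F" unfolding PP_def F_def by auto
  then show ?thesis using translate[OF d] by blast
qed


lemma small_sizes:
  "csize (circ_of pA) = 1" "csize (circ_of pB) = 1" "csize (circ_of FBot) = 1"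
  "csize (circ_of (FImp FBot pA)) = 3" "csize (circ_of (FImp pA pB)) = 3"
  "csize (circ_of (FVar (Suc 0))) = 1" "csize (circ_of (FImp pA (FVar (Suc 0)))) = 3"
  by (simp_all add: circ_of_def csize_def)

theorem mainTheorem5:
  fixes A :: "circuit set"
  assumes "\<not> sound A"
  shows "\<exists>c::nat. \<forall>C. wf_circuit C \<longrightarrow>
           (\<exists>\<pi>. is_proof A \<pi> C \<and> proof_length \<pi> \<le> c * csize C)"
proof -
  obtain \<pi>0 X0 where p0: "valid A \<pi>0" "X0 \<in> set \<pi>0" "unfold_circuit X0 = FBot"
    using PP_bot[OF assms] unfolding PP_def by blast
  show ?thesis
  proof (rule exI[of _ "proof_length \<pi>0 + 16"], intro allI impI)
    fix C assume wC: "wf_circuit C"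
    have c1: "1 \<le> csize C" using wC by (simp add: wf_circuit_def csize_def)
    define D1 where "D1 = [C]"
    define D2 where "D2 = [circ_of FBot, C]"
    have w1: "\<forall>D\<in>set D1. wf_circuit D" using wC by (simp add: D1_def)
    have w2: "\<forall>D\<in>set D2. wf_circuit D" using wC by (simp add: D2_def wf_circ_of)
    define X1 where "X1 = inst (circ_of (FImp FBot pA)) D1"
    define X2 where "X2 = inst (circ_of pA) D2"
    define X3 where "X3 = inst (circ_of (FImp pA pB)) D2"
    define X4 where "X4 = inst (circ_of pB) D2"
    note I1 = inst_lemma[OF wf_circ_of w1] and I2 = inst_lemma[OF wf_circ_of w2]
    have w: "wf_circuit X1" "wf_circuit X2" "wf_circuit X3" "wf_circuit X4"
      using I1 I2 by (auto simp: X1_def X2_def X3_def X4_def)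
    have u: "unfold_circuit X1 = FImp FBot (unfold_circuit C)" "unfold_circuit X2 = FBot"
      "unfold_circuit X3 = FImp FBot (unfold_circuit C)" "unfold_circuit X4 = unfold_circuit C"
      using I1 I2 by (auto simp: X1_def X2_def X3_def X4_def sub_of_def D1_def D2_def)
    have sz: "csize X1 \<le> 3 + csize C" "csize X2 \<le> 2 + csize C" "csize X3 \<le> 4 + csize C" "csize X4 \<le> 2 + csize C"
    proof -
      have "csize X1 \<le> csize (circ_of (FImp FBot pA)) + sum_list (map csize D1)" unfolding X1_def using I1 by blast
      moreover have "csize X2 \<le> csize (circ_of pA) + sum_list (map csize D2)" unfolding X2_def using I2 by blast
      moreover have "csize X3 \<le> csize (circ_of (FImp pA pB)) + sum_list (map csize D2)" unfolding X3_def using I2 by blast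
      moreover have "csize X4 \<le> csize (circ_of pB) + sum_list (map csize D2)" unfolding X4_def using I2 by blast
      ultimately show "csize X1 \<le> 3 + csize C" "csize X2 \<le> 2 + csize C" "csize X3 \<le> 4 + csize C" "csize X4 \<le> 2 + csize C"
        by (simp_all add: small_sizes D1_def D2_def)
    qed
    have ax13: "([], FImp FBot pA) \<in> set frege_rules" by (simp add: frege_rules_def)
    have mpr: "([pA, FImp pA pB], pB) \<in> set frege_rules" by (simp add: frege_rules_def)
    have s1: "cf_step A \<pi>0 X1" unfolding cf_step_def
      apply (rule disjI1) apply (rule bexI[OF _ ax13]) apply (simp only: prod.case)
      using w1 by (auto simp: X1_def)
    have v1: "valid A (\<pi>0 @ [X1])" using valid_snoc[OF p0(1) w(1) s1] .
    have s2: "cf_step A (\<pi>0 @ [X1]) X2" unfolding cf_step_def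
      using p0(2,3) u(2) by (intro disjI2 disjI2 bexI[of _ X0]) auto
    have v2: "valid A (\<pi>0 @ [X1, X2])" using valid_snoc[OF v1 w(2) s2] by simp
    have s3: "cf_step A (\<pi>0 @ [X1, X2]) X3" unfolding cf_step_def
      using u(1,3) by (intro disjI2 disjI2 bexI[of _ X1]) auto
    have v3: "valid A (\<pi>0 @ [X1, X2, X3])" using valid_snoc[OF v2 w(3) s3] by simp
    have zz: "(\<forall>D\<in>set D2. wf_circuit D) \<and> X4 = inst (circ_of pB) D2 \<and>
       (\<forall>p\<in>set [pA, FImp pA pB]. inst (circ_of p) D2 \<in> set (\<pi>0 @ [X1, X2, X3]))"
      using w2 by (simp add: X2_def X3_def X4_def)
    have s4: "cf_step A (\<pi>0 @ [X1, X2, X3]) X4"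
      unfolding cf_step_def apply (rule disjI1) apply (rule bexI[OF _ mpr]) apply (simp only: prod.case)
      using zz by blast
    have v4: "valid A (\<pi>0 @ [X1, X2, X3, X4])" using valid_snoc[OF v3 w(4) s4] by simp
    have s5: "cf_step A (\<pi>0 @ [X1, X2, X3, X4]) C" unfolding cf_step_def
      using u(4) by (intro disjI2 disjI2 bexI[of _ X4]) auto
    have v5: "valid A (\<pi>0 @ [X1, X2, X3, X4, C])" using valid_snoc[OF v4 wC s5] by simp
    have pr: "is_proof A (\<pi>0 @ [X1, X2, X3, X4, C]) C" using v5 by (simp add: is_proof_valid)
    have "proof_length (\<pi>0 @ [X1, X2, X3, X4, C]) = proof_length \<pi>0 + csize X1 + csize X2 + csize X3 + csize X4 + csize C"
      by (simp add: proof_length_def)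
    also have "\<dots> \<le> proof_length \<pi>0 + 11 + 5 * csize C" using sz by simp
    also have "\<dots> \<le> (proof_length \<pi>0 + 16) * csize C"
    proof -
      have h1: "proof_length \<pi>0 \<le> proof_length \<pi>0 * csize C" using c1 by simp
      have h2: "11 \<le> 11 * csize C" using c1 by simp
      show ?thesis unfolding add_mult_distrib using h1 h2 by linarith
    qed
    finally show "\<exists>\<pi>. is_proof A \<pi> C \<and> proof_length \<pi> \<le> (proof_length \<pi>0 + 16) * csize C"
      using pr by blast
  qed
qed

end
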